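(* Let $D$ be a ZX-diagram and $c$ a cycle in $D$. Let $t_1,\dots,t_n$ be tokens on $D$ and $s$ a token state with $t_1\cdots t_n\leadsto^* s$. Then for every non-null term $t$ of $s$, $P(c,t_1\cdots t_n)=P(c,t)$.
   Context: ZX-diagrams. A (pure) ZX-diagram is built from generators by sequential composition $D_2\circ D_1$ (the output edges of $D_1$ are joined to the equally many input edges of $D_2$, the latter being relabeled by the former) and parallel composition $D_1\otimes D_2$. The generators are: the identity (a single wire), the swap (two crossing wires), the cup (two input edges $e_0,e_1$, no output), the cap (no input, two output edges $e_0,e_1$), the green spider $Z^n_m(\alpha)$ with $\alpha\in\mathbb R$, input edges $e_1,\dots,e_n$ and output edges $e'_1,\dots,e'_m$, and the Hadamard gate $H$ with input edge $e_0$ and output edge $e_1$. Diagrams are read top to bottom; distinct edges have distinct labels; identity and swap introduce no node. $\mathcal E(D)$ is the set of edges. Each edge has a top and a bottom end; top-to-bottom is the direction $\downarrow$, the reverse is $\uparrow$. Tokens. A token is a triple $(e\,d\,x)\in\mathcal E(D)\times\{\downarrow,\uparrow\}\times\{0,1\}$; token states are elements of the commutative polynomial algebra $\mathbf{tkS}(D)=\mathbb C[\mathbf{tk}(D)]$ whose indeterminates are the tokens; terms are monomials with nonzero coefficient. Rules ($x,y,b\in\{0,1\}$, $\neg x=1-x$): Collision: $(e\downarrow x)(e\uparrow y)\leadsto_c\delta_{x,y}$. Diffusion: cup: $(e_b\downarrow x)\leadsto_d(e_{\neg b}\uparrow x)$; cap: $(e_b\uparrow x)\leadsto_d(e_{\neg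 b}\downarrow x)$; green spider: $(e_k\downarrow x)\leadsto_d e^{i\alpha x}\prod_{i\neq k}(e_i\uparrow x)\prod_j(e'_j\downarrow x)$, $(e'_k\uparrow x)\leadsto_d e^{i\alpha x}\prod_{j\neq k}(e'_j\downarrow x)\prod_i(e_i\uparrow x)$; Hadamard: $(e_0\downarrow x)\leadsto_d\frac{(-1)^x}{\sqrt2}(e_1\downarrow x)+\frac1{\sqrt2}(e_1\downarrow\neg x)$, $(e_1\uparrow x)\leadsto_d\frac{(-1)^x}{\sqrt2}(e_0\uparrow x)+\frac1{\sqrt2}(e_0\uparrow\neg x)$. A step $\leadsto_d$ (resp. $\leadsto_c$) chooses a term and a token (resp. colliding pair) occurring as a factor, replaces it by the right-hand side and expands. A token state is collision-free if no $\leadsto_c$ step applies. $s\leadsto u$ iff $s\leadsto_d s'\leadsto_c^*u$ with $u$ collision-free; $\leadsto^*$ is the reflexive-transitive closure. Paths, cycles, polarity. View $D$ as a multigraph whose vertices are the occurrences of cups, caps, green spiders and Hadamard gates (plus an endpoint for each dangling edge end) and whose edges are those of $D$. A path $(e_0,\dots,e_n)$ is a sequence of pairwise distinct edges with a traversal going from $e_i$ to $e_{i+1}$ through a common vertex $g_i$, the $g_i$ pairwise distinct; the orientation of $e_i$ is $\downarrow$ if traversed from top end to bottom end and $\uparrow$ otherwise. A cycle is such a path whose traversal, after its last edge, returns through a vertex to its first edge. For a token $t=(e\,d\,x)$ and a path or cycle $c$: $P(c,t)=1$ if $e\in c$ with orientation $d$, $-1$ if $e\in c$ with the opposite orientation,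 $0$ otherwise; $P(c,\alpha t_1\cdots t_m)=\sum_iP(c,t_i)$, $P(c,\alpha)=0$ for constants. *)

theory Defs
  imports Complex_Main "HOL-Library.Poly_Mapping"
begin

type_synonym edge = nat

text \<open>Node occurrences (generators other than identity and swap).
  NZ alpha es es': green spider with inputs es = [e_1..e_n], outputs es' = [e'_1..e'_m].\<close>
datatype node = NCup edge edge | NCap edge edge | NZ real "edge list" "edge list" | NH edge edge

fun node_ins :: "node \<Rightarrow> edge list" where
  "node_ins (NCup a b) = [a, b]"
| "node_ins (NCap a b) = []"
| "node_ins (NZ \<alpha> es es') = es"
| "node_ins (NH a b) = [a]"

fun node_outs :: "node \<Rightarrow> edge list" where
  "node_outs (NCup a b) = []"
| "node_outs (NCap a b) = [a, b]"
| "node_outs (NZ \<alpha> es es') = es'"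
| "node_outs (NH a b) = [b]"

fun map_node :: "(edge \<Rightarrow> edge) \<Rightarrow> node \<Rightarrow> node" where
  "map_node f (NCup a b) = NCup (f a) (f b)"
| "map_node f (NCap a b) = NCap (f a) (f b)"
| "map_node f (NZ \<alpha> es es') = NZ \<alpha> (map f es) (map f es')"
| "map_node f (NH a b) = NH (f a) (f b)"

record zxd =
  d_ins :: "edge list"
  d_outs :: "edge list"
  d_nodes :: "node list"

definition edges :: "zxd \<Rightarrow> edge set" where
  "edges D = set (d_ins D) \<union> set (d_outs D)
     \<union> (\<Union>g\<in>set (d_nodes D). set (node_ins g) \<union> set (node_outs g))"

text \<open>Sequential composition D2 o D1: the input edges of D2 are relabelled by the
  output edges of D1.\<close>
definition relabel :: "zxd \<Rightarrow> zxd \<Rightarrow> edge \<Rightarrow> edge" where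
  "relabel D1 D2 e = (case map_of (zip (d_ins D2) (d_outs D1)) e of Some e' \<Rightarrow> e' | None \<Rightarrow> e)"

definition seq_comp :: "zxd \<Rightarrow> zxd \<Rightarrow> zxd" where
  "seq_comp D2 D1 = \<lparr> d_ins = d_ins D1,
      d_outs = map (relabel D1 D2) (d_outs D2),
      d_nodes = d_nodes D1 @ map (map_node (relabel D1 D2)) (d_nodes D2) \<rparr>"

definition par_comp :: "zxd \<Rightarrow> zxd \<Rightarrow> zxd" where
  "par_comp D1 D2 = \<lparr> d_ins = d_ins D1 @ d_ins D2, d_outs = d_outs D1 @ d_outs D2,
      d_nodes = d_nodes D1 @ d_nodes D2 \<rparr>"

inductive zx_diagram :: "zxd \<Rightarrow> bool" where
  gen_id: "zx_diagram \<lparr> d_ins = [e], d_outs = [e], d_nodes = [] \<rparr>"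
| gen_swap: "a \<noteq> b \<Longrightarrow> zx_diagram \<lparr> d_ins = [a, b], d_outs = [b, a], d_nodes = [] \<rparr>"
| gen_cup: "a \<noteq> b \<Longrightarrow> zx_diagram \<lparr> d_ins = [a, b], d_outs = [], d_nodes = [NCup a b] \<rparr>"
| gen_cap: "a \<noteq> b \<Longrightarrow> zx_diagram \<lparr> d_ins = [], d_outs = [a, b], d_nodes = [NCap a b] \<rparr>"
| gen_Z: "distinct (es @ es') \<Longrightarrow>
     zx_diagram \<lparr> d_ins = es, d_outs = es', d_nodes = [NZ \<alpha> es es'] \<rparr>"
| gen_H: "a \<noteq> b \<Longrightarrow> zx_diagram \<lparr> d_ins = [a], d_outs = [b], d_nodes = [NH a b] \<rparr>"
| seq: "zx_diagram D1 \<Longrightarrow> zx_diagram D2 \<Longrightarrow> length (d_outs D1) = length (d_ins D2) \<Longrightarrow>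
     (edges D2 - set (d_ins D2)) \<inter> edges D1 = {} \<Longrightarrow> zx_diagram (seq_comp D2 D1)"
| par: "zx_diagram D1 \<Longrightarrow> zx_diagram D2 \<Longrightarrow> edges D1 \<inter> edges D2 = {} \<Longrightarrow>
     zx_diagram (par_comp D1 D2)"

datatype dir = Down | Up

text \<open>A token (e, d, x); the bit x \<in> {0,1} is represented by a boolean (True = 1).\<close>
type_synonym token = "edge \<times> dir \<times> bool"

text \<open>Token states: the commutative polynomial algebra C[tk(D)]; a polynomial is a
  finitely supported map from monomials (finitely supported token multiplicities)
  to coefficients.\<close>
type_synonym tstate = "(token \<Rightarrow>\<^sub>0 nat) \<Rightarrow>\<^sub>0 complex"

definition tk :: "token \<Rightarrow> tstate" where
  "tk t = Poly_Mapping.single (Poly_Mapping.single t 1) 1"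

definition cst :: "complex \<Rightarrow> tstate" where
  "cst c = Poly_Mapping.single 0 c"

definition tok_on :: "zxd \<Rightarrow> token \<Rightarrow> bool" where
  "tok_on D t \<longleftrightarrow> fst t \<in> edges D"

definition bitval :: "bool \<Rightarrow> real" where
  "bitval x = (if x then 1 else 0)"

definition phase :: "real \<Rightarrow> bool \<Rightarrow> complex" where
  "phase \<alpha> x = exp (\<i> * of_real (\<alpha> * bitval x))"

definition hsign :: "bool \<Rightarrow> complex" where
  "hsign x = (-1) ^ (if x then 1 else 0)"

inductive diff_rule :: "zxd \<Rightarrow> token \<Rightarrow> tstate \<Rightarrow> bool" where
  cup0: "NCup e0 e1 \<in> set (d_nodes D) \<Longrightarrow> diff_rule D (e0, Down, x) (tk (e1, Up, x))"
| cup1: "NCup e0 e1 \<in> set (d_nodes D) \<Longrightarrow> diff_rule D (e1, Down, x) (tk (e0, Up, x))"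
| cap0: "NCap e0 e1 \<in> set (d_nodes D) \<Longrightarrow> diff_rule D (e0, Up, x) (tk (e1, Down, x))"
| cap1: "NCap e0 e1 \<in> set (d_nodes D) \<Longrightarrow> diff_rule D (e1, Up, x) (tk (e0, Down, x))"
| zin: "NZ \<alpha> es es' \<in> set (d_nodes D) \<Longrightarrow> k < length es \<Longrightarrow>
     diff_rule D (es ! k, Down, x)
       (cst (phase \<alpha> x) * (\<Prod>i\<in>{i. i < length es \<and> i \<noteq> k}. tk (es ! i, Up, x))
          * (\<Prod>j<length es'. tk (es' ! j, Down, x)))"
| zout: "NZ \<alpha> es es' \<in> set (d_nodes D) \<Longrightarrow> k < length es' \<Longrightarrow>
     diff_rule D (es' ! k, Up, x)
       (cst (phase \<alpha> x) * (\<Prod>j\<in>{j. j < length es' \<and> j \<noteq> k}. tk (es' ! j, Down, x))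
          * (\<Prod>i<length es. tk (es ! i, Up, x)))"
| hin: "NH e0 e1 \<in> set (d_nodes D) \<Longrightarrow>
     diff_rule D (e0, Down, x)
       (cst (hsign x / sqrt 2) * tk (e1, Down, x) + cst (1 / sqrt 2) * tk (e1, Down, \<not> x))"
| hout: "NH e0 e1 \<in> set (d_nodes D) \<Longrightarrow>
     diff_rule D (e1, Up, x)
       (cst (hsign x / sqrt 2) * tk (e0, Up, x) + cst (1 / sqrt 2) * tk (e0, Up, \<not> x))"

definition d_step :: "zxd \<Rightarrow> tstate \<Rightarrow> tstate \<Rightarrow> bool" where
  "d_step D s s' \<longleftrightarrow> (\<exists>(m :: token \<Rightarrow>\<^sub>0 nat) (t :: token) (r :: tstate). m \<in> Poly_Mapping.keys s \<and> Poly_Mapping.lookup m t \<ge> 1 \<and> diff_rule D t r \<and>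
     s' = s - Poly_Mapping.single m (Poly_Mapping.lookup s m)
           + Poly_Mapping.single (m - Poly_Mapping.single t 1) (Poly_Mapping.lookup s m) * r)"

definition c_step :: "zxd \<Rightarrow> tstate \<Rightarrow> tstate \<Rightarrow> bool" where
  "c_step D s s' \<longleftrightarrow> (\<exists>(m :: token \<Rightarrow>\<^sub>0 nat) (e :: edge) (x :: bool) (y :: bool). m \<in> Poly_Mapping.keys s \<and> Poly_Mapping.lookup m (e, Down, x) \<ge> 1 \<and> Poly_Mapping.lookup m (e, Up, y) \<ge> 1 \<and>
     s' = s - Poly_Mapping.single m (Poly_Mapping.lookup s m)
       + Poly_Mapping.single (m - Poly_Mapping.single (e, Down, x) 1 - Poly_Mapping.single (e, Up, y) 1)
           (Poly_Mapping.lookup s m * (if x = y then 1 else 0)))"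

definition collision_free :: "zxd \<Rightarrow> tstate \<Rightarrow> bool" where
  "collision_free D s \<longleftrightarrow> \<not> (\<exists>s'. c_step D s s')"

definition tk_step :: "zxd \<Rightarrow> tstate \<Rightarrow> tstate \<Rightarrow> bool" where
  "tk_step D s u \<longleftrightarrow> (\<exists>s'. d_step D s s' \<and> (c_step D)\<^sup>*\<^sup>* s' u \<and> collision_free D u)"

text \<open>Vertices of the multigraph: node occurrences (by index) and one endpoint for
  each dangling edge end (True = top end, False = bottom end).\<close>
datatype vertex = VNode nat | VEnd edge bool

definition top_v :: "zxd \<Rightarrow> edge \<Rightarrow> vertex" where
  "top_v D e = (if \<exists>i < length (d_nodes D). e \<in> set (node_outs (d_nodes D ! i))
     then VNode (THE i. i < length (d_nodes D) \<and> e \<in> set (node_outs (d_nodes D ! i)))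
     else VEnd e True)"

definition bot_v :: "zxd \<Rightarrow> edge \<Rightarrow> vertex" where
  "bot_v D e = (if \<exists>i < length (d_nodes D). e \<in> set (node_ins (d_nodes D ! i))
     then VNode (THE i. i < length (d_nodes D) \<and> e \<in> set (node_ins (d_nodes D ! i)))
     else VEnd e False)"

definition head_v :: "zxd \<Rightarrow> edge \<times> dir \<Rightarrow> vertex" where
  "head_v D ed = (if snd ed = Down then bot_v D (fst ed) else top_v D (fst ed))"

definition tail_v :: "zxd \<Rightarrow> edge \<times> dir \<Rightarrow> vertex" where
  "tail_v D ed = (if snd ed = Down then top_v D (fst ed) else bot_v D (fst ed))"

definition is_cycle :: "zxd \<Rightarrow> (edge \<times> dir) list \<Rightarrow> bool" where
  "is_cycle D c \<longleftrightarrow> c \<noteq> [] \<and> distinct (map fst c) \<and> set (map fst c) \<subseteq> edges D \<and>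
     (\<forall>i < length c. head_v D (c ! i) = tail_v D (c ! (Suc i mod length c))) \<and>
     distinct (map (head_v D) c)"

definition opp :: "dir \<Rightarrow> dir" where
  "opp d = (if d = Down then Up else Down)"

definition pol_tok :: "(edge \<times> dir) list \<Rightarrow> token \<Rightarrow> int" where
  "pol_tok c t = (if (fst t, fst (snd t)) \<in> set c then 1
                  else if (fst t, opp (fst (snd t))) \<in> set c then -1 else 0)"

definition pol_mono :: "(edge \<times> dir) list \<Rightarrow> (token \<Rightarrow>\<^sub>0 nat) \<Rightarrow> int" where
  "pol_mono c m = (\<Sum>t\<in>Poly_Mapping.keys m. int (Poly_Mapping.lookup m t) * pol_tok c t)"

end

theory Submission
  imports Defs
begin

lemma pol_mono_add: "pol_mono c (a + b) = pol_mono c a + pol_mono c b"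
proof -
  have fin: "finite (Poly_Mapping.keys a \<union> Poly_Mapping.keys b)" by simp
  have "\<And>m. Poly_Mapping.keys m \<subseteq> Poly_Mapping.keys a \<union> Poly_Mapping.keys b \<Longrightarrow>
     pol_mono c m = (\<Sum>t\<in>Poly_Mapping.keys a \<union> Poly_Mapping.keys b. int (Poly_Mapping.lookup m t) * pol_tok c t)"
    unfolding pol_mono_def
    by (rule sum.mono_neutral_left[OF fin]) (auto simp: in_keys_iff)
  then have "pol_mono c (a+b) = (\<Sum>t\<in>Poly_Mapping.keys a \<union> Poly_Mapping.keys b. int (Poly_Mapping.lookup (a+b) t) * pol_tok c t)"
     "pol_mono c a = (\<Sum>t\<in>Poly_Mapping.keys a \<union> Poly_Mapping.keys b. int (Poly_Mapping.lookup a t) * pol_tok c t)"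
     "pol_mono c b = (\<Sum>t\<in>Poly_Mapping.keys a \<union> Poly_Mapping.keys b. int (Poly_Mapping.lookup b t) * pol_tok c t)"
    using keys_add[of a b] by auto
  then show ?thesis by (simp add: lookup_add sum.distrib algebra_simps)
qed

lemma pol_mono_0[simp]: "pol_mono c 0 = 0"
  by (simp add: pol_mono_def)

lemma pol_mono_single[simp]: "pol_mono c (Poly_Mapping.single t k) = int k * pol_tok c t"
  by (simp add: pol_mono_def)

lemma pol_mono_sum: "pol_mono c (\<Sum>a\<in>A. Poly_Mapping.single (f a) 1) = (\<Sum>a\<in>A. pol_tok c (f a))"
  by (induction A rule: infinite_finite_induct) (auto simp: pol_mono_add)

lemma pol_mono_sum_list: "pol_mono c (\<Sum>t\<leftarrow>ts. Poly_Mapping.single t 1) = (\<Sum>t\<leftarrow>ts. pol_tok c t)"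
  by (induction ts) (auto simp: pol_mono_add)

lemma tk_mult: "tk u * Poly_Mapping.single k 1 = Poly_Mapping.single (Poly_Mapping.single u 1 + k) (1::complex)"
  by (simp add: tk_def mult_single)

lemma prod_tk: "finite A \<Longrightarrow> (\<Prod>a\<in>A. tk (f a)) = Poly_Mapping.single (\<Sum>a\<in>A. Poly_Mapping.single (f a) 1) 1"
  by (induction A rule: finite_induct) (auto simp: tk_mult)

lemma prod_list_tk: "(\<Prod>t\<leftarrow>ts. tk t) = Poly_Mapping.single (\<Sum>t\<leftarrow>ts. Poly_Mapping.single t 1) 1"
  by (induction ts) (auto simp: tk_mult)

lemma cst_mult: "cst a * Poly_Mapping.single k 1 = Poly_Mapping.single k a"
  by (simp add: cst_def mult_single)

lemma minus_add_single: "1 \<le> Poly_Mapping.lookup m t \<Longrightarrow> (m - Poly_Mapping.single t 1) + Poly_Mapping.single t (1::nat) = m"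
  by (rule poly_mapping_eqI) (auto simp: lookup_add lookup_minus lookup_single when_def)

definition tops :: "zxd \<Rightarrow> edge list" where
  "tops D = d_ins D @ concat (map node_outs (d_nodes D))"
definition bots :: "zxd \<Rightarrow> edge list" where
  "bots D = d_outs D @ concat (map node_ins (d_nodes D))"
definition inc :: "node \<Rightarrow> (edge \<times> dir) list" where
  "inc N = map (\<lambda>e. (e, Up)) (node_ins N) @ map (\<lambda>e. (e, Down)) (node_outs N)"
definition oppp :: "edge \<times> dir \<Rightarrow> edge \<times> dir" where
  "oppp p = (fst p, opp (snd p))"

lemma oppp_oppp[simp]: "oppp (oppp p) = p"
proof (cases p)
  case (Pair e d) then show ?thesis by (cases d) (simp_all add: oppp_def opp_def)
qed

lemma concat_uniq:
  "distinct (concat (map f xs)) \<Longrightarrow> i < length xs \<Longrightarrow> j < length xs \<Longrightarrow>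
   e \<in> set (f (xs ! i)) \<Longrightarrow> e \<in> set (f (xs ! j)) \<Longrightarrow> i = j"
proof (induction xs arbitrary: i j)
  case Nil then show ?case by simp
next
  case (Cons a xs)
  have d: "distinct (f a)" "distinct (concat (map f xs))" "set (f a) \<inter> set (concat (map f xs)) = {}"
    using Cons.prems(1) by auto
  show ?case
  proof (cases i)
    case 0 note i0 = this
    show ?thesis
    proof (cases j)
      case 0 then show ?thesis using i0 by simp
    next
      case (Suc j')
      then have "e \<in> set (concat (map f xs))" using Cons.prems(3,5) by auto
      moreover have "e \<in> set (f a)" using Cons.prems(4) i0 by simp
      ultimately show ?thesis using d(3) by blast
    qed
  next
    case (Suc i') note iS = this
    show ?thesis
    proof (cases j)
      case 0
      then have "e \<in> set (f a)" using Cons.prems(5) by simp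
      moreover have "e \<in> set (concat (map f xs))" using Cons.prems(2,4) iS by auto
      ultimately show ?thesis using d(3) by blast
    next
      case (Suc j')
      then show ?thesis using Cons.IH[OF d(2), of i' j'] Cons.prems iS by simp
    qed
  qed
qed

lemma bot_v_iff:
  assumes "distinct (bots D)" "i < length (d_nodes D)"
  shows "bot_v D e = VNode i \<longleftrightarrow> e \<in> set (node_ins (d_nodes D ! i))"
proof -
  have dc: "distinct (concat (map node_ins (d_nodes D)))" using assms(1) by (simp add: bots_def)
  define P where "P = (\<lambda>j. j < length (d_nodes D) \<and> e \<in> set (node_ins (d_nodes D ! j)))"
  have u: "\<And>k j. P k \<Longrightarrow> P j \<Longrightarrow> k = j" unfolding P_def using concat_uniq[OF dc] by blast
  have bv: "bot_v D e = (if Ex P then VNode (The P) else VEnd e False)"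
    unfolding bot_v_def P_def by simp
  show ?thesis
  proof
    assume h: "bot_v D e = VNode i"
    have ex: "Ex P" proof (rule ccontr) assume n: "\<not> Ex P" have "bot_v D e = VEnd e False" using bv n by metis then show False using h by simp qed
    then obtain j where j: "P j" by blast
    have "The P = j" using j u by (intro the_equality) auto
    then have "i = j" using h ex bv by simp
    then show "e \<in> set (node_ins (d_nodes D ! i))" using j P_def by simp
  next
    assume h: "e \<in> set (node_ins (d_nodes D ! i))"
    then have pi: "P i" using assms(2) P_def by simp
    have "The P = i" using pi u by (intro the_equality) auto
    then show "bot_v D e = VNode i" using bv pi by auto
  qed
qed

lemma top_v_iff:
  assumes "distinct (tops D)" "i < length (d_nodes D)"
  shows "top_v D e = VNode i \<longleftrightarrow> e \<in> set (node_outs (d_nodes D ! i))"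
proof -
  have dc: "distinct (concat (map node_outs (d_nodes D)))" using assms(1) by (simp add: tops_def)
  define P where "P = (\<lambda>j. j < length (d_nodes D) \<and> e \<in> set (node_outs (d_nodes D ! j)))"
  have u: "\<And>k j. P k \<Longrightarrow> P j \<Longrightarrow> k = j" unfolding P_def using concat_uniq[OF dc] by blast
  have bv: "top_v D e = (if Ex P then VNode (The P) else VEnd e True)"
    unfolding top_v_def P_def by simp
  show ?thesis
  proof
    assume h: "top_v D e = VNode i"
    have ex: "Ex P" proof (rule ccontr) assume n: "\<not> Ex P" have "top_v D e = VEnd e True" using bv n by metis then show False using h by simp qed
    then obtain j where j: "P j" by blast
    have "The P = j" using j u by (intro the_equality) auto
    then have "i = j" using h ex bv by simp
    then show "e \<in> set (node_outs (d_nodes D ! i))" using j P_def by simp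
  next
    assume h: "e \<in> set (node_outs (d_nodes D ! i))"
    then have pi: "P i" using assms(2) P_def by simp
    have "The P = i" using pi u by (intro the_equality) auto
    then show "top_v D e = VNode i" using bv pi by auto
  qed
qed

lemma rot_card:
  assumes "0 < n"
  shows "card {j. j < n \<and> P (Suc j mod n)} = card {j. j < n \<and> P j}"
proof -
  let ?g = "\<lambda>j. Suc j mod n"
  have inj: "inj_on ?g {..<n}"
  proof (rule inj_onI)
    fix j k assume "j \<in> {..<n}" "k \<in> {..<n}" "Suc j mod n = Suc k mod n"
    moreover have "\<And>j. j < n \<Longrightarrow> Suc j mod n = (if Suc j = n then 0 else Suc j)"
      by auto
    ultimately show "j = k" by (auto split: if_splits)
  qed
  have img: "?g ` {j. j < n \<and> P (Suc j mod n)} = {j. j < n \<and> P j}"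
  proof
    show "?g ` {j. j < n \<and> P (Suc j mod n)} \<subseteq> {j. j < n \<and> P j}" using assms by auto
  next
    show "{j. j < n \<and> P j} \<subseteq> ?g ` {j. j < n \<and> P (Suc j mod n)}"
    proof
      fix k assume k: "k \<in> {j. j < n \<and> P j}"
      define j where "j = (if k = 0 then n - 1 else k - 1)"
      have "j < n" "Suc j mod n = k" using k assms unfolding j_def by auto
      then show "k \<in> ?g ` {j. j < n \<and> P (Suc j mod n)}" using k by (auto intro!: image_eqI[of _ _ j])
    qed
  qed
  have "inj_on ?g {j. j < n \<and> P (Suc j mod n)}" by (rule inj_on_subset[OF inj]) auto
  then show ?thesis using card_image img by metis
qed

lemma pol_tok_opp:
  assumes "distinct (map fst c)"
  shows "pol_tok c (e, d, x) = (if (e, d) \<in> set c then 1 else 0) - (if (e, opp d) \<in> set c then 1 else 0)"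
proof -
  have "\<not> ((e, d) \<in> set c \<and> (e, opp d) \<in> set c)"
    using eq_key_imp_eq_value[OF assms] by (cases d) (fastforce simp: opp_def)+
  then show ?thesis unfolding pol_tok_def by auto
qed

lemma pol_tok_neg:
  assumes "distinct (map fst c)"
  shows "pol_tok c (e, Down, x) = - pol_tok c (e, Up, y)"
  using pol_tok_opp[OF assms] by (simp add: opp_def)

lemma node_bal:
  assumes dt: "distinct (tops D)" and db: "distinct (bots D)" and cy: "is_cycle D c"
    and N: "N \<in> set (d_nodes D)"
  shows "(\<Sum>q\<leftarrow>inc N. pol_tok c (fst q, snd q, x)) = 0"
proof -
  obtain i where i: "i < length (d_nodes D)" "d_nodes D ! i = N" using N by (auto simp: in_set_conv_nth)
  define v where "v = VNode i"
  have dfst: "distinct (map fst c)" and dc: "distinct c" using cy by (auto simp: is_cycle_def distinct_map)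
  have bv: "\<And>e. bot_v D e = v \<longleftrightarrow> e \<in> set (node_ins N)" using bot_v_iff[OF db i(1)] i v_def by simp
  have tv: "\<And>e. top_v D e = v \<longleftrightarrow> e \<in> set (node_outs N)" using top_v_iff[OF dt i(1)] i v_def by simp
  have tl: "\<And>p. tail_v D p = v \<longleftrightarrow> p \<in> set (inc N)"
  proof -
    fix p :: "edge \<times> dir" obtain e d where p: "p = (e, d)" by force
    show "tail_v D p = v \<longleftrightarrow> p \<in> set (inc N)"
      using bv tv unfolding p by (cases d) (auto simp: tail_v_def inc_def)
  qed
  have hd: "\<And>p. head_v D p = v \<longleftrightarrow> oppp p \<in> set (inc N)"
  proof -
    fix p :: "edge \<times> dir" obtain e d where p: "p = (e, d)" by force
    show "head_v D p = v \<longleftrightarrow> oppp p \<in> set (inc N)"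
      using bv tv unfolding p by (cases d) (auto simp: head_v_def inc_def oppp_def opp_def)
  qed
  have dn: "distinct (node_ins N)" "distinct (node_outs N)"
    using dt db N by (auto simp: tops_def bots_def distinct_concat_iff)
  then have dinc: "distinct (inc N)" by (auto simp: inc_def distinct_map inj_on_def)
  let ?Q = "set (inc N)" let ?C = "set c"
  have "(\<Sum>q\<leftarrow>inc N. pol_tok c (fst q, snd q, x)) = (\<Sum>q\<in>?Q. pol_tok c (fst q, snd q, x))"
    using dinc by (simp add: sum_list_distinct_conv_sum_set)
  also have "\<dots> = (\<Sum>q\<in>?Q. (if q \<in> ?C then 1 else 0) - (if oppp q \<in> ?C then 1 else 0))"
    using pol_tok_opp[OF dfst] by (intro sum.cong) (auto simp: oppp_def)
  also have "\<dots> = int (card (?Q \<inter> ?C)) - int (card (?Q \<inter> {q. oppp q \<in> ?C}))"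
    by (simp add: sum_subtractf sum.If_cases)
  also have "card (?Q \<inter> ?C) = card {p\<in>?C. tail_v D p = v}"
    using tl by (intro arg_cong[where f=card]) auto
  also have "card (?Q \<inter> {q. oppp q \<in> ?C}) = card (oppp ` (?Q \<inter> {q. oppp q \<in> ?C}))"
    by (rule card_image[symmetric]) (rule inj_on_inverseI[of _ oppp], simp)
  also have "oppp ` (?Q \<inter> {q. oppp q \<in> ?C}) = {p\<in>?C. head_v D p = v}"
  proof -
    have inv: "\<And>p. oppp (oppp p) = p" by simp
    show ?thesis
    proof (intro equalityI subsetI)
      fix p assume "p \<in> oppp ` (?Q \<inter> {q. oppp q \<in> ?C})"
      then obtain q where "p = oppp q" "q \<in> ?Q" "oppp q \<in> ?C" by blast
      then show "p \<in> {p\<in>?C. head_v D p = v}" using hd inv by simp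
    next
      fix p assume "p \<in> {p\<in>?C. head_v D p = v}"
      then have "oppp p \<in> ?Q" "p \<in> ?C" using hd by auto
      then show "p \<in> oppp ` (?Q \<inter> {q. oppp q \<in> ?C})" using inv by (intro image_eqI[of _ _ "oppp p"]) auto
    qed
  qed
  finally have eq0: "(\<Sum>q\<leftarrow>inc N. pol_tok c (fst q, snd q, x)) =
     int (card {p\<in>?C. tail_v D p = v}) - int (card {p\<in>?C. head_v D p = v})" .
  have cf: "card {p\<in>?C. P p} = card {j. j < length c \<and> P (c ! j)}" for P
  proof -
    have "inj_on (nth c) {j. j < length c \<and> P (c ! j)}" using dc by (simp add: inj_on_nth)
    moreover have "(nth c) ` {j. j < length c \<and> P (c ! j)} = {p\<in>?C. P p}"
      by (auto simp: in_set_conv_nth) (metis (mono_tags, lifting) image_eqI mem_Collect_eq)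
    ultimately show ?thesis using card_image by metis
  qed
  have eq: "(\<Sum>q\<leftarrow>inc N. pol_tok c (fst q, snd q, x)) =
     int (card {j. j < length c \<and> tail_v D (c ! j) = v}) - int (card {j. j < length c \<and> head_v D (c ! j) = v})"
    using eq0 cf[of "\<lambda>p. tail_v D p = v"] cf[of "\<lambda>p. head_v D p = v"] by simp
  have "{j. j < length c \<and> head_v D (c ! j) = v} = {j. j < length c \<and> tail_v D (c ! (Suc j mod length c)) = v}"
    using cy unfolding is_cycle_def by auto
  moreover have "0 < length c" using cy by (auto simp: is_cycle_def)
  ultimately have "card {j. j < length c \<and> head_v D (c ! j) = v} = card {j. j < length c \<and> tail_v D (c ! j) = v}"
    using rot_card[of "length c" "\<lambda>j. tail_v D (c ! j) = v"] by simp
  then show ?thesis using eq by simp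
qed

lemma pol_tok_bit: "pol_tok c (e, d, x) = pol_tok c (e, d, y)"
  by (simp add: pol_tok_def)

lemma sum_list_nth: "sum_list (map g es) = (\<Sum>i<length es. g (es ! i))"
  by (simp add: sum_list_sum_nth atLeast0LessThan)

lemma sum_remove_k: "k < length es \<Longrightarrow>
  (\<Sum>i<length es. g (es ! i)) = g (es ! k) + (\<Sum>i\<in>{i. i < length es \<and> i \<noteq> k}. g (es ! i))"
proof -
  assume k: "k < length es"
  have "{i. i < length es \<and> i \<noteq> k} = {..<length es} - {k}" by auto
  then show ?thesis using k by (simp add: sum.remove)
qed

lemma keys_tk: "Poly_Mapping.keys (tk u) = {Poly_Mapping.single u 1}"
  by (simp add: tk_def)

lemma keys_cst_single: "Poly_Mapping.keys (cst a * Poly_Mapping.single k b * Poly_Mapping.single l d) \<subseteq> {k + l}"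
  by (simp add: cst_def mult_single)

lemma keys_H: "Poly_Mapping.keys (cst a * tk u + cst b * tk w) \<subseteq> {Poly_Mapping.single u 1, Poly_Mapping.single w 1}"
proof -
  have "Poly_Mapping.keys (cst a * tk u) \<subseteq> {Poly_Mapping.single u 1}"
       "Poly_Mapping.keys (cst b * tk w) \<subseteq> {Poly_Mapping.single w 1}"
    by (simp_all add: cst_def tk_def mult_single)
  then show ?thesis using keys_add[of "cst a * tk u" "cst b * tk w"] by blast
qed

lemma rule_pol:
  assumes dt: "distinct (tops D)" and db: "distinct (bots D)" and cy: "is_cycle D c"
    and r: "diff_rule D t r" and m: "m' \<in> Poly_Mapping.keys r"
  shows "pol_mono c m' = pol_tok c t"
proof -
  have dfst: "distinct (map fst c)" using cy by (simp add: is_cycle_def)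
  note bal = node_bal[OF dt db cy]
  note neg = pol_tok_neg[OF dfst]
  from r m show ?thesis
  proof cases
    case (cup0 e0 e1 x)
    have "pol_tok c (e0, Up, x) + pol_tok c (e1, Up, x) = 0" using bal[OF cup0(3), of x] by (simp add: inc_def)
    then show ?thesis using cup0 m neg[of e0 x x] by (simp add: keys_tk)
  next
    case (cup1 e0 e1 x)
    have "pol_tok c (e0, Up, x) + pol_tok c (e1, Up, x) = 0" using bal[OF cup1(3), of x] by (simp add: inc_def)
    then show ?thesis using cup1 m neg[of e1 x x] by (simp add: keys_tk)
  next
    case (cap0 e0 e1 x)
    have "pol_tok c (e0, Down, x) + pol_tok c (e1, Down, x) = 0" using bal[OF cap0(3), of x] by (simp add: inc_def)
    then show ?thesis using cap0 m neg[of e0 x x] neg[of e1 x x] by (simp add: keys_tk)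
  next
    case (cap1 e0 e1 x)
    have "pol_tok c (e0, Down, x) + pol_tok c (e1, Down, x) = 0" using bal[OF cap1(3), of x] by (simp add: inc_def)
    then show ?thesis using cap1 m neg[of e0 x x] neg[of e1 x x] by (simp add: keys_tk)
  next
    case (hin e0 e1 x)
    have b: "pol_tok c (e0, Up, x) + pol_tok c (e1, Down, x) = 0" using bal[OF hin(3), of x] by (simp add: inc_def)
    have "m' = Poly_Mapping.single (e1, Down, x) 1 \<or> m' = Poly_Mapping.single (e1, Down, \<not> x) 1"
      using m keys_H hin by blast
    then show ?thesis using hin b neg[of e0 x x] pol_tok_bit[of c e1 Down "\<not> x" x] by auto
  next
    case (hout e0 e1 x)
    have b: "pol_tok c (e0, Up, x) + pol_tok c (e1, Down, x) = 0" using bal[OF hout(3), of x] by (simp add: inc_def)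
    have "m' = Poly_Mapping.single (e0, Up, x) 1 \<or> m' = Poly_Mapping.single (e0, Up, \<not> x) 1"
      using m keys_H hout by blast
    then show ?thesis using hout b neg[of e1 x x] pol_tok_bit[of c e0 Up "\<not> x" x] by auto
  next
    case (zin \<alpha> es es' k x)
    define S where "S = {i. i < length es \<and> i \<noteq> k}"
    have "r = cst (phase \<alpha> x) * Poly_Mapping.single (\<Sum>i\<in>S. Poly_Mapping.single (es ! i, Up, x) 1) 1
              * Poly_Mapping.single (\<Sum>j<length es'. Poly_Mapping.single (es' ! j, Down, x) 1) 1"
      using zin(2) by (simp add: prod_tk S_def)
    then have m': "m' = (\<Sum>i\<in>S. Poly_Mapping.single (es ! i, Up, x) 1) + (\<Sum>j<length es'. Poly_Mapping.single (es' ! j, Down, x) 1)"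
      using m keys_cst_single by blast
    have b: "(\<Sum>i<length es. pol_tok c (es ! i, Up, x)) + (\<Sum>j<length es'. pol_tok c (es' ! j, Down, x)) = 0"
      using bal[OF zin(3), of x] by (simp add: inc_def sum_list_nth)
    have "pol_mono c m' = (\<Sum>i\<in>S. pol_tok c (es ! i, Up, x)) + (\<Sum>j<length es'. pol_tok c (es' ! j, Down, x))"
      by (simp only: m' pol_mono_add pol_mono_sum)
    also have "\<dots> = - pol_tok c (es ! k, Up, x)"
      using b sum_remove_k[OF zin(4), of "\<lambda>e. pol_tok c (e, Up, x)"] unfolding S_def by simp
    finally show ?thesis using zin(1) neg[of "es ! k" x x] by simp
  next
    case (zout \<alpha> es es' k x)
    define S where "S = {j. j < length es' \<and> j \<noteq> k}"
    have "r = cst (phase \<alpha> x) * Poly_Mapping.single (\<Sum>j\<in>S. Poly_Mapping.single (es' ! j, Down, x) 1) 1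
              * Poly_Mapping.single (\<Sum>i<length es. Poly_Mapping.single (es ! i, Up, x) 1) 1"
      using zout(2) by (simp add: prod_tk S_def)
    then have m': "m' = (\<Sum>j\<in>S. Poly_Mapping.single (es' ! j, Down, x) 1) + (\<Sum>i<length es. Poly_Mapping.single (es ! i, Up, x) 1)"
      using m keys_cst_single by blast
    have b: "(\<Sum>i<length es. pol_tok c (es ! i, Up, x)) + (\<Sum>j<length es'. pol_tok c (es' ! j, Down, x)) = 0"
      using bal[OF zout(3), of x] by (simp add: inc_def sum_list_nth)
    have "pol_mono c m' = (\<Sum>j\<in>S. pol_tok c (es' ! j, Down, x)) + (\<Sum>i<length es. pol_tok c (es ! i, Up, x))"
      by (simp only: m' pol_mono_add pol_mono_sum)
    also have "\<dots> = - pol_tok c (es' ! k, Down, x)"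
      using b sum_remove_k[OF zout(4), of "\<lambda>e. pol_tok c (e, Down, x)"] unfolding S_def by simp
    finally show ?thesis using zout(1) neg[of "es' ! k" x x] by simp
  qed
qed

definition inv_pol :: "(edge \<times> dir) list \<Rightarrow> int \<Rightarrow> tstate \<Rightarrow> bool" where
  "inv_pol c P s \<longleftrightarrow> (\<forall>m\<in>Poly_Mapping.keys s. pol_mono c m = P)"

lemma keys_upd: "Poly_Mapping.keys (s - Poly_Mapping.single m a + Y) \<subseteq> Poly_Mapping.keys s \<union> {m} \<union> Poly_Mapping.keys Y"
proof -
  have "Poly_Mapping.keys (s - Poly_Mapping.single m a + Y) \<subseteq> Poly_Mapping.keys (s - Poly_Mapping.single m a) \<union> Poly_Mapping.keys Y"
    by (rule keys_add)
  moreover have "Poly_Mapping.keys (s - Poly_Mapping.single m a) \<subseteq> Poly_Mapping.keys s \<union> {m}"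
    using keys_diff[of s "Poly_Mapping.single m a"] by (auto split: if_splits)
  ultimately show ?thesis by blast
qed

lemma keys_upd_single: "Poly_Mapping.keys (s - Poly_Mapping.single m a + Poly_Mapping.single k b) \<subseteq> Poly_Mapping.keys s \<union> {m} \<union> {k}"
  using keys_upd[of s m a "Poly_Mapping.single k b"] by (auto split: if_splits)

lemma d_step_inv:
  assumes dt: "distinct (tops D)" and db: "distinct (bots D)" and cy: "is_cycle D c"
    and inv: "inv_pol c P s" and st: "d_step D s s'"
  shows "inv_pol c P s'"
proof -
  obtain m t r where m: "m \<in> Poly_Mapping.keys s" and t: "Poly_Mapping.lookup m t \<ge> 1"
    and r: "diff_rule D t r"
    and s': "s' = s - Poly_Mapping.single m (Poly_Mapping.lookup s m)
           + Poly_Mapping.single (m - Poly_Mapping.single t 1) (Poly_Mapping.lookup s m) * r"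
    using st unfolding d_step_def by blast
  have Pm: "pol_mono c m = P" using inv m by (simp add: inv_pol_def)
  have pm: "pol_mono c (m - Poly_Mapping.single t 1) + pol_tok c t = P"
    using Pm minus_add_single[OF t] pol_mono_add[of c "m - Poly_Mapping.single t 1" "Poly_Mapping.single t 1"]
    by simp
  show ?thesis unfolding inv_pol_def
  proof
    fix k assume k: "k \<in> Poly_Mapping.keys s'"
    then consider "k \<in> Poly_Mapping.keys s" | "k = m"
      | "k \<in> Poly_Mapping.keys (Poly_Mapping.single (m - Poly_Mapping.single t 1) (Poly_Mapping.lookup s m) * r)"
      using keys_upd[of s m "Poly_Mapping.lookup s m" "Poly_Mapping.single (m - Poly_Mapping.single t 1) (Poly_Mapping.lookup s m) * r"] s' k by blast
    then show "pol_mono c k = P"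
    proof cases
      case 1 then show ?thesis using inv by (simp add: inv_pol_def)
    next
      case 2 then show ?thesis using Pm by simp
    next
      case 3
      then obtain a b where "a \<in> Poly_Mapping.keys (Poly_Mapping.single (m - Poly_Mapping.single t 1) (Poly_Mapping.lookup s m))"
        and b: "b \<in> Poly_Mapping.keys r" and kab: "k = a + b"
        using keys_mult by blast
      then have a: "a = m - Poly_Mapping.single t 1" by (simp split: if_splits)
      have "pol_mono c b = pol_tok c t" using rule_pol[OF dt db cy r b] .
      then show ?thesis using pm kab a by (simp add: pol_mono_add)
    qed
  qed
qed

lemma c_step_inv:
  assumes cy: "is_cycle D c" and inv: "inv_pol c P s" and st: "c_step D s s'"
  shows "inv_pol c P s'"
proof -
  obtain m e x y where m: "m \<in> Poly_Mapping.keys s" and t1: "Poly_Mapping.lookup m (e, Down, x) \<ge> 1"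
    and t2: "Poly_Mapping.lookup m (e, Up, y) \<ge> 1"
    and s': "s' = s - Poly_Mapping.single m (Poly_Mapping.lookup s m)
       + Poly_Mapping.single (m - Poly_Mapping.single (e, Down, x) 1 - Poly_Mapping.single (e, Up, y) 1)
           (Poly_Mapping.lookup s m * (if x = y then 1 else 0))"
    using st unfolding c_step_def by blast
  have dfst: "distinct (map fst c)" using cy by (simp add: is_cycle_def)
  have Pm: "pol_mono c m = P" using inv m by (simp add: inv_pol_def)
  define m1 where "m1 = m - Poly_Mapping.single (e, Down, x) 1"
  have e1: "m1 + Poly_Mapping.single (e, Down, x) 1 = m" using minus_add_single[OF t1] m1_def by simp
  have t2': "Poly_Mapping.lookup m1 (e, Up, y) \<ge> 1"
    using t2 unfolding m1_def by (simp add: lookup_minus lookup_single)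
  have e2: "(m1 - Poly_Mapping.single (e, Up, y) 1) + Poly_Mapping.single (e, Up, y) 1 = m1"
    using minus_add_single[OF t2'] .
  have z: "pol_tok c (e, Down, x) + pol_tok c (e, Up, y) = 0" using pol_tok_neg[OF dfst, of e x y] by simp
  have pk: "pol_mono c (m1 - Poly_Mapping.single (e, Up, y) 1) = P"
  proof -
    have "pol_mono c m = pol_mono c (m1 - Poly_Mapping.single (e, Up, y) 1) + pol_tok c (e, Up, y) + pol_tok c (e, Down, x)"
      using e1 e2 by (metis pol_mono_add pol_mono_single of_nat_1 mult_1)
    then show ?thesis using Pm z by simp
  qed
  show ?thesis unfolding inv_pol_def
  proof
    fix k assume k: "k \<in> Poly_Mapping.keys s'"
    then consider "k \<in> Poly_Mapping.keys s" | "k = m" | "k = m1 - Poly_Mapping.single (e, Up, y) 1"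
      using keys_upd_single[of s m "Poly_Mapping.lookup s m"] s' k unfolding m1_def by blast
    then show "pol_mono c k = P"
    proof cases
      case 1 then show ?thesis using inv by (simp add: inv_pol_def)
    next
      case 2 then show ?thesis using Pm by simp
    next
      case 3 then show ?thesis using pk by simp
    qed
  qed
qed

lemma tk_step_inv:
  assumes dt: "distinct (tops D)" and db: "distinct (bots D)" and cy: "is_cycle D c"
    and inv: "inv_pol c P s" and st: "tk_step D s u"
  shows "inv_pol c P u"
proof -
  obtain s' where d: "d_step D s s'" and cs: "(c_step D)\<^sup>*\<^sup>* s' u" using st unfolding tk_step_def by blast
  have "inv_pol c P s'" using d_step_inv[OF dt db cy inv d] .
  from cs this show ?thesis
    by (induction rule: rtranclp_induct) (auto intro: c_step_inv[OF cy])
qed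

lemma main_wf:
  assumes dt: "distinct (tops D)" and db: "distinct (bots D)"
    and "is_cycle D c"
    and "(tk_step D)\<^sup>*\<^sup>* (\<Prod>t\<leftarrow>ts. tk t) s"
    and "m \<in> Poly_Mapping.keys s"
  shows "(\<Sum>t\<leftarrow>ts. pol_tok c t) = pol_mono c m"
proof -
  have "inv_pol c (\<Sum>t\<leftarrow>ts. pol_tok c t) (\<Prod>t\<leftarrow>ts. tk t)"
  proof -
    have k: "Poly_Mapping.keys (\<Prod>t\<leftarrow>ts. tk t) \<subseteq> {\<Sum>t\<leftarrow>ts. Poly_Mapping.single t 1}"
      by (simp add: prod_list_tk)
    show ?thesis unfolding inv_pol_def using k pol_mono_sum_list[of c ts] by blast
  qed
  from assms(4) this have "inv_pol c (\<Sum>t\<leftarrow>ts. pol_tok c t) s"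
    by (induction rule: rtranclp_induct) (auto intro: tk_step_inv[OF dt db assms(3)])
  then show ?thesis using assms(5) by (simp add: inv_pol_def)
qed

lemma tops_sub: "set (tops D) \<subseteq> edges D"
  by (auto simp: tops_def edges_def)
lemma bots_sub: "set (bots D) \<subseteq> edges D"
  by (auto simp: bots_def edges_def)

lemma node_outs_map[simp]: "node_outs (map_node f N) = map f (node_outs N)"
  by (cases N) auto
lemma node_ins_map[simp]: "node_ins (map_node f N) = map f (node_ins N)"
  by (cases N) auto

lemma seq_wf:
  assumes dt1: "distinct (tops D1)" and db1: "distinct (bots D1)"
    and dt2: "distinct (tops D2)" and db2: "distinct (bots D2)"
    and len: "length (d_outs D1) = length (d_ins D2)"
    and disj: "(edges D2 - set (d_ins D2)) \<inter> edges D1 = {}"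
  shows "distinct (tops (seq_comp D2 D1)) \<and> distinct (bots (seq_comp D2 D1))"
proof -
  define \<rho> where "\<rho> = relabel D1 D2"
  define ins2 where "ins2 = d_ins D2"
  define outs1 where "outs1 = d_outs D1"
  have len': "length ins2 = length outs1" using len ins2_def outs1_def by simp
  have di2: "distinct ins2" using dt2 by (simp add: tops_def ins2_def)
  have do1: "distinct outs1" using db1 by (simp add: bots_def outs1_def)
  have o1E: "set outs1 \<subseteq> edges D1" by (auto simp: edges_def outs1_def)
  have i2E: "set ins2 \<subseteq> edges D2" by (auto simp: edges_def ins2_def)
  have rho_out: "\<And>e. e \<notin> set ins2 \<Longrightarrow> \<rho> e = e"
  proof -
    fix e assume "e \<notin> set ins2"
    then have "map_of (zip ins2 outs1) e = None" using len' by simp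
    then show "\<rho> e = e" by (simp add: \<rho>_def relabel_def ins2_def outs1_def)
  qed
  have rho_in: "\<And>k. k < length ins2 \<Longrightarrow> \<rho> (ins2 ! k) = outs1 ! k"
  proof -
    fix k assume "k < length ins2"
    then have "map_of (zip ins2 outs1) (ins2 ! k) = Some (outs1 ! k)"
      using len' di2 map_of_zip_nth[of ins2 outs1 k] by simp
    then show "\<rho> (ins2 ! k) = outs1 ! k" by (simp add: \<rho>_def relabel_def ins2_def outs1_def)
  qed
  have rho_in_set: "\<And>e. e \<in> set ins2 \<Longrightarrow> \<rho> e \<in> set outs1"
  proof -
    fix e assume "e \<in> set ins2"
    then obtain k where "k < length ins2" "e = ins2 ! k" by (auto simp: in_set_conv_nth)
    then show "\<rho> e \<in> set outs1" using rho_in len' by auto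
  qed
  have rho_range: "\<And>e. e \<in> edges D2 \<Longrightarrow> \<rho> e \<in> set outs1 \<union> (edges D2 - set ins2)"
  proof -
    fix e assume e: "e \<in> edges D2"
    show "\<rho> e \<in> set outs1 \<union> (edges D2 - set ins2)"
    proof (cases "e \<in> set ins2")
      case True
      then obtain k where "k < length ins2" "e = ins2 ! k" by (auto simp: in_set_conv_nth)
      then show ?thesis using rho_in len' by auto
    next
      case False then show ?thesis using rho_out e by auto
    qed
  qed
  have disj': "(edges D2 - set ins2) \<inter> set outs1 = {}" using disj o1E ins2_def by blast
  have inj: "inj_on \<rho> (edges D2)"
  proof (rule inj_onI)
    fix a b assume a: "a \<in> edges D2" and b: "b \<in> edges D2" and ab: "\<rho> a = \<rho> b"
    show "a = b"
    proof (cases "a \<in> set ins2"; cases "b \<in> set ins2")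
      assume "a \<in> set ins2" "b \<in> set ins2"
      then obtain i j where "i < length ins2" "a = ins2 ! i" "j < length ins2" "b = ins2 ! j"
        by (auto simp: in_set_conv_nth)
      then show ?thesis using ab rho_in do1 len' by (simp add: nth_eq_iff_index_eq)
    next
      assume "a \<in> set ins2" "b \<notin> set ins2"
      then have "\<rho> a \<in> set outs1" "\<rho> b \<in> edges D2 - set ins2" using rho_in_set rho_out b by auto
      then show ?thesis using ab disj' by auto
    next
      assume "a \<notin> set ins2" "b \<in> set ins2"
      then have "\<rho> b \<in> set outs1" "\<rho> a \<in> edges D2 - set ins2" using rho_in_set rho_out a by auto
      then show ?thesis using ab disj' by auto
    next
      assume "a \<notin> set ins2" "b \<notin> set ins2"
      then show ?thesis using ab rho_out by simp
    qed
  qed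
  define X where "X = concat (map node_outs (d_nodes D2))"
  have tD2: "tops D2 = ins2 @ X" by (simp add: tops_def X_def ins2_def)
  have dX: "distinct X" "set X \<inter> set ins2 = {}" using dt2 tD2 by auto
  have XE: "set X \<subseteq> edges D2" using tops_sub[of D2] tD2 by auto
  have mX: "map \<rho> X = X" using dX rho_out by (intro map_idI) auto
  have tS: "tops (seq_comp D2 D1) = tops D1 @ map \<rho> X"
    by (simp add: tops_def seq_comp_def X_def \<rho>_def map_concat comp_def)
  have t: "distinct (tops (seq_comp D2 D1))"
    unfolding tS mX using dt1 dX XE tops_sub[of D1] disj ins2_def by auto
  define B1 where "B1 = concat (map node_ins (d_nodes D1))"
  define Y where "Y = concat (map node_ins (d_nodes D2))"
  have bD1: "bots D1 = outs1 @ B1" by (simp add: bots_def B1_def outs1_def)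
  have bD2: "bots D2 = d_outs D2 @ Y" by (simp add: bots_def Y_def)
  have bS: "bots (seq_comp D2 D1) = map \<rho> (d_outs D2) @ B1 @ map \<rho> Y"
    by (simp add: bots_def seq_comp_def Y_def B1_def \<rho>_def map_concat comp_def)
  have dAC: "distinct (map \<rho> (d_outs D2 @ Y))"
    using db2 bD2 inj bots_sub[of D2] by (simp only: distinct_map) (metis inj_on_subset)
  have dB1: "distinct B1" "set B1 \<inter> set outs1 = {}" using db1 bD1 by auto
  have B1E: "set B1 \<subseteq> edges D1" using bots_sub[of D1] bD1 by auto
  have rAC: "set (map \<rho> (d_outs D2 @ Y)) \<subseteq> set outs1 \<union> (edges D2 - set ins2)"
    using rho_range bots_sub[of D2] bD2 by auto
  have dj: "set B1 \<inter> set (map \<rho> (d_outs D2 @ Y)) = {}"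
    using rAC dB1(2) B1E disj ins2_def by blast
  have b: "distinct (bots (seq_comp D2 D1))"
    unfolding bS using dAC dB1(1) dj by auto
  show ?thesis using t b by simp
qed

lemma distinct_swap_mid: "distinct (a @ b @ c @ d) = distinct (a @ c @ b @ d)"
  by auto

lemma par_wf:
  assumes dt1: "distinct (tops D1)" and db1: "distinct (bots D1)"
    and dt2: "distinct (tops D2)" and db2: "distinct (bots D2)"
    and disj: "edges D1 \<inter> edges D2 = {}"
  shows "distinct (tops (par_comp D1 D2)) \<and> distinct (bots (par_comp D1 D2))"
proof -
  have "distinct (tops D1 @ tops D2)" "distinct (bots D1 @ bots D2)"
    using assms tops_sub[of D1] tops_sub[of D2] bots_sub[of D1] bots_sub[of D2] by auto
  then show ?thesis unfolding tops_def bots_def par_comp_def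
    by (simp only: zxd.simps map_append concat_append append_assoc
        distinct_swap_mid[of "d_ins D1"] distinct_swap_mid[of "d_outs D1"])
qed

lemma zx_wf: "zx_diagram D \<Longrightarrow> distinct (tops D) \<and> distinct (bots D)"
proof (induction rule: zx_diagram.induct)
  case (seq D1 D2) then show ?case using seq_wf by blast
next
  case (par D1 D2) then show ?case using par_wf by blast
qed (auto simp: tops_def bots_def)

theorem mainTheorem3:
  fixes D :: zxd and c :: "(edge \<times> dir) list" and ts :: "token list" and s :: tstate
    and m :: "token \<Rightarrow>\<^sub>0 nat"
  assumes "zx_diagram D"
    and "is_cycle D c"
    and "\<forall>t \<in> set ts. tok_on D t"
    and "(tk_step D)\<^sup>*\<^sup>* (\<Prod>t\<leftarrow>ts. tk t) s"
    and "m \<in> Poly_Mapping.keys s"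
  shows "(\<Sum>t\<leftarrow>ts. pol_tok c t) = pol_mono c m"
  using main_wf[OF _ _ assms(2) assms(4) assms(5)] zx_wf[OF assms(1)] by blast

end
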